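(* For every $j\ge 0$ the limit $p_j^*=\lim_{n\to\infty}p_{j,n}$ exists; put $u_0^*=0$ and $u_j^*=1/p_{j-1}^*$ for $j\ge1$, and $$S_N=\sum_{j=0}^N\bigl(3-2p_j^*-p_j^*u_j^*\bigr).$$ Then the limits $S=\lim_{N\to\infty}S_N$ and $C=\lim_{n\to\infty}C_n$ exist, and $C=2S+1$.
   Context: For $n\ge1$ and $\mathbf{x}=(x_1,\dots,x_n)\in(0,\infty)^n$ let $f_n(\mathbf{x})=\sum_{i=1}^n x_i+\sum_{1\le i\le j\le n}\prod_{k=i}^j \frac1{x_k}$, $A_n=\inf_{\mathbf{x}\in(0,\infty)^n} f_n(\mathbf{x})$, and $C_n=3n-A_n$. Let $\Phi$ be the partial map of $\mathbb{R}^2$ defined for $p\ne0$ by $\Phi(p,u)=\bigl(p^2(u+1)-1,\ 1/p\bigr)$. For $n\ge1$, the trajectory $T_n$ is the (existing and unique) finite sequence $(p_{j,n},u_{j,n})$, $j=0,\dots,n$, with $(p_{j,n},u_{j,n})=\Phi(p_{j-1,n},u_{j-1,n})$ for $1\le j\le n$, $u_{0,n}=0$, $p_{n,n}=0$, and $p_{j,n}>0$ for $0\le j\le n-1$. *)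

theory Defs
  imports Complex_Main
begin

text \<open>Vectors x in (0,oo)^n are functions nat => real, only indices 1..n are used.\<close>
definition f_fun :: "nat \<Rightarrow> (nat \<Rightarrow> real) \<Rightarrow> real" where
  "f_fun n x = (\<Sum>i=1..n. x i) + (\<Sum>i=1..n. \<Sum>j=i..n. \<Prod>k=i..j. 1 / x k)"

definition A_val :: "nat \<Rightarrow> real" where
  "A_val n = (INF x\<in>{x. \<forall>i\<in>{1..n}. x i > 0}. f_fun n x)"

definition C_val :: "nat \<Rightarrow> real" where
  "C_val n = 3 * real n - A_val n"

definition Phi :: "real \<times> real \<Rightarrow> real \<times> real" where
  "Phi pu = (let (p, u) = pu in (p^2 * (u + 1) - 1, 1 / p))"

definition is_traj :: "nat \<Rightarrow> (nat \<Rightarrow> real) \<Rightarrow> (nat \<Rightarrow> real) \<Rightarrow> bool" where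
  "is_traj n p u \<longleftrightarrow>
     u 0 = 0 \<and> p n = 0 \<and> (\<forall>j<n. p j > 0) \<and>
     (\<forall>j\<in>{1..n}. p (j - 1) \<noteq> 0 \<and> (p j, u j) = Phi (p (j - 1), u (j - 1)))"

text \<open>p_{j,n}: the j-th p-coordinate of the (unique) trajectory T_n, meaningful for j \<le> n.\<close>
definition p_traj :: "nat \<Rightarrow> nat \<Rightarrow> real" where
  "p_traj j n = (THE x. \<exists>p u. is_traj n p u \<and> p j = x)"

end

theory Submission
  imports Defs
begin

fun PR :: "real \<Rightarrow> nat \<Rightarrow> real \<times> real" where
  "PR a 0 = (a, 0)"
| "PR a (Suc k) = (let (p, r) = PR a k in (p * (p + r) - 1, p + r - 1 / p))"

definition P :: "real \<Rightarrow> nat \<Rightarrow> real" where "P a k = fst (PR a k)"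
definition R :: "real \<Rightarrow> nat \<Rightarrow> real" where "R a k = snd (PR a k)"

lemma P_0[simp]: "P a 0 = a" and R_0[simp]: "R a 0 = 0"
  by (simp_all add: P_def R_def)

lemma P_Suc: "P a (Suc k) = P a k * (P a k + R a k) - 1"
  and R_Suc: "R a (Suc k) = P a k + R a k - 1 / P a k"
  by (simp_all add: P_def R_def split: prod.splits)

lemma R_eq: "P a k \<noteq> 0 \<Longrightarrow> R a (Suc k) = P a (Suc k) / P a k"
  by (simp add: P_Suc R_Suc field_simps)

lemma second_order:
  assumes "P a k \<noteq> 0"
  shows "P a (Suc (Suc k)) + 1 = P a (Suc k) ^ 2 * (1 + 1 / P a k)"
  using assms by (simp add: P_Suc[of a "Suc k"] R_eq[OF assms] field_simps power2_eq_square)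

lemma R_nonneg:
  assumes "\<forall>j\<le>k. P a j > 0" shows "R a k \<ge> 0"
proof (cases k)
  case 0 then show ?thesis by simp
next
  case (Suc m)
  then have "P a m > 0" "P a k > 0" using assms by auto
  then show ?thesis using R_eq[of a m] Suc by simp
qed

lemma mono_ab:
  assumes "a < b" "\<forall>j<k. P a j > 0"
  shows "P a k < P b k \<and> R a k \<le> R b k"
  using assms(2)
proof (induction k)
  case 0 then show ?case using assms(1) by simp
next
  case (Suc k)
  then have IH: "P a k < P b k" "R a k \<le> R b k" by auto
  have pa: "P a k > 0" using Suc.prems by auto
  have ra: "R a k \<ge> 0" using R_nonneg[of k a] Suc.prems by auto
  have "P a k * (P a k + R a k) < P b k * (P b k + R b k)"
    using IH pa ra by (intro mult_strict_mono) auto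
  moreover have "1 / P b k < 1 / P a k" using IH pa by (simp add: frac_less2)
  ultimately show ?case using IH by (simp add: P_Suc R_Suc)
qed

lemma escape:
  assumes "P a k \<ge> 2" "R a k \<ge> 0" "k \<le> m"
  shows "P a m \<ge> 2 \<and> R a m \<ge> 0"
  using assms(3)
proof (induction m)
  case 0 then show ?case using assms by simp
next
  case (Suc m)
  show ?case
  proof (cases "k = Suc m")
    case True then show ?thesis using assms by simp
  next
    case False
    then have h: "P a m \<ge> 2" "R a m \<ge> 0" using Suc by auto
    have "P a m * (P a m + R a m) \<ge> 2 * 2" using h by (intro mult_mono) auto
    moreover have "1 / P a m \<le> P a m + R a m"
    proof -
      have "1 / P a m \<le> 1" using h by simp
      then show ?thesis using h by linarith
    qed
    ultimately show ?thesis using h by (simp add: P_Suc R_Suc)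
  qed
qed

lemma invariant:
  assumes "P a k \<ge> 1" "R a k \<ge> 1" "k \<le> m"
  shows "P a m \<ge> 1 \<and> R a m \<ge> 1"
  using assms(3)
proof (induction m)
  case 0 then show ?case using assms by simp
next
  case (Suc m)
  show ?case
  proof (cases "k = Suc m")
    case True then show ?thesis using assms by simp
  next
    case False
    then have h: "P a m \<ge> 1" "R a m \<ge> 1" using Suc by auto
    have "P a m * (P a m + R a m) \<ge> 1 * 2" using h by (intro mult_mono) auto
    moreover have "1 / P a m \<le> P a m" using h
      by (metis divide_le_eq_1 dual_order.trans less_eq_real_def order.strict_trans1 zero_less_one)
    ultimately show ?thesis using h by (simp add: P_Suc R_Suc)
  qed
qed

lemma cont_PR:
  assumes "\<forall>j<k. P a j \<noteq> 0"
  shows "isCont (\<lambda>b. P b k) a \<and> isCont (\<lambda>b. R b k) a"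
  using assms
proof (induction k)
  case 0 then show ?case by (simp add: P_def R_def)
next
  case (Suc k)
  then have IH: "isCont (\<lambda>b. P b k) a" "isCont (\<lambda>b. R b k) a" and nz: "P a k \<noteq> 0" by auto
  have "isCont (\<lambda>b. P b k * (P b k + R b k) - 1) a" using IH by (intro continuous_intros)
  moreover have "isCont (\<lambda>b. P b k + R b k - 1 / P b k) a" using IH nz by (intro continuous_intros) auto
  ultimately show ?case by (simp add: P_Suc R_Suc)
qed

definition rootp :: "nat \<Rightarrow> real \<Rightarrow> bool" where
  "rootp n a \<longleftrightarrow> (\<forall>j<n. P a j > 0) \<and> P a n = 0"

lemma root_unique_aux: "rootp n a \<Longrightarrow> rootp n b \<Longrightarrow> \<not> a < b"
  using mono_ab[of a b n] unfolding rootp_def by auto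

lemma root_unique: "rootp n a \<Longrightarrow> rootp n b \<Longrightarrow> a = b"
  using root_unique_aux[of n a b] root_unique_aux[of n b a] by linarith

lemma root_lt2: assumes "rootp n a" shows "a < 2"
proof (rule ccontr)
  assume "\<not> a < 2"
  then have "P a n \<ge> 2" using escape[of a 0 n] by simp
  then show False using assms unfolding rootp_def by simp
qed

lemma root_pos:
  assumes "rootp n a" "a < b" "j \<le> n"
  shows "P b j > 0"
proof -
  have "P a j < P b j" using mono_ab[of a b j] assms unfolding rootp_def by auto
  moreover have "P a j \<ge> 0" using assms unfolding rootp_def
    by (cases "j < n") auto
  ultimately show ?thesis by linarith
qed

lemma root_step:
  assumes r: "rootp n a"
  shows "\<exists>c. c > a \<and> rootp (Suc n) c"
proof -
  have a2: "a < 2" using root_lt2[OF r] .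
  have nz: "\<forall>j<n. P b j \<noteq> 0" if "b \<in> {a..2}" for b
  proof (cases "b = a")
    case True then show ?thesis using r unfolding rootp_def by auto
  next
    case False
    then have "a < b" using that by auto
    then show ?thesis using root_pos[OF r] by (metis less_imp_le less_irrefl)
  qed
  have "continuous_on {a..2} (\<lambda>b. P b (Suc n))"
  proof (intro continuous_at_imp_continuous_on ballI)
    fix b assume "b \<in> {a..2}"
    then have "isCont (\<lambda>b. P b n) b" "isCont (\<lambda>b. R b n) b" using cont_PR nz by auto
    then show "isCont (\<lambda>b. P b (Suc n)) b" unfolding P_Suc by (intro continuous_intros)
  qed
  moreover have "P a (Suc n) \<le> 0" using r unfolding rootp_def by (simp add: P_Suc)
  moreover have "0 \<le> P 2 (Suc n)" using escape[of 2 0 "Suc n"] by simp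
  ultimately obtain c where c: "a \<le> c" "c \<le> 2" "P c (Suc n) = 0"
    using IVT'[of "\<lambda>b. P b (Suc n)" a 0 2] a2 by auto
  have "c \<noteq> a" using c r unfolding rootp_def by (auto simp: P_Suc)
  then have "a < c" using c by auto
  then have "rootp (Suc n) c" using root_pos[OF r] c unfolding rootp_def
    by (simp add: less_Suc_eq_le)
  then show ?thesis using \<open>a < c\<close> by blast
qed

lemma root_ex: "\<exists>a. rootp n a"
proof (induction n)
  case 0 have "rootp 0 0" by (simp add: rootp_def) then show ?case by blast
next
  case (Suc n) then show ?case using root_step by blast
qed

definition aa :: "nat \<Rightarrow> real" where "aa n = (THE a. rootp n a)"

lemma aa_root: "rootp n (aa n)"
  unfolding aa_def using root_ex root_unique by (metis theI)

lemma aa_eq: "rootp n a \<Longrightarrow> aa n = a"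
  using aa_root root_unique by blast

lemma aa_mono: "aa n < aa (Suc n)"
  using root_step[OF aa_root[of n]] aa_eq by blast

lemma aa_lt2: "aa n < 2" using root_lt2 aa_root by blast

lemma aa_0: "aa 0 = 0" using aa_eq[of 0 0] by (simp add: rootp_def)

lemma P_char:
  assumes pos: "\<forall>j<n. q j > 0" and q1: "1 \<le> n \<Longrightarrow> q 1 = q 0 ^ 2 - 1"
    and rec: "\<forall>k. k + 2 \<le> n \<longrightarrow> q (k+2) + 1 = q (k+1)^2 * (1 + 1 / q k)"
  shows "j \<le> n \<Longrightarrow> P (q 0) j = q j \<and> (j \<ge> 1 \<longrightarrow> R (q 0) j = q j / q (j-1))"
proof (induction j)
  case 0 then show ?case by simp
next
  case (Suc j)
  show ?case
  proof (cases j)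
    case 0
    have "q 0 > 0" using pos Suc.prems by auto
    then show ?thesis using 0 q1 Suc.prems
      by (simp add: P_Suc R_Suc field_simps power2_eq_square)
  next
    case (Suc i)
    have IH: "P (q 0) j = q j" "R (q 0) j = q j / q i" using Suc.IH Suc.prems Suc by auto
    have qj: "q j > 0" "q i > 0" using pos Suc.prems Suc by auto
    have r: "q (Suc j) + 1 = q j ^ 2 * (1 + 1 / q i)"
      using rec[rule_format, of i] Suc.prems Suc by (simp add: numeral_2_eq_2)
    have e1: "P (q 0) (Suc j) = q (Suc j)"
      unfolding P_Suc IH using r qj by (simp add: field_simps power2_eq_square)
    have r': "q (Suc j) = q j ^ 2 * (1 + 1 / q i) - 1" using r by simp
    have e2: "R (q 0) (Suc j) = q (Suc j) / q j"
      unfolding R_Suc IH r' using qj by (simp add: field_simps power2_eq_square)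
    show ?thesis using e1 e2 by simp
  qed
qed

lemma P1: "P a (Suc 0) = a ^ 2 - 1"
  by (simp add: P_Suc[of a 0, simplified] power2_eq_square)

lemma sym_aa:
  assumes "j < n"
  shows "P (aa n) j * P (aa n) (n - 1 - j) = 1"
proof -
  define p where "p = P (aa n)"
  have ppos: "\<forall>j<n. p j > 0" and pn: "p n = 0" using aa_root[of n] unfolding rootp_def p_def by auto
  have so: "p (k+2) + 1 = p (k+1)^2 * (1 + 1 / p k)" if "k < n" for k
    using second_order[of "aa n" k] ppos[rule_format, OF that] unfolding p_def by (simp add: numeral_2_eq_2)
  have p1: "p 1 = p 0 ^ 2 - 1" unfolding p_def by (simp add: P1)
  define q where "q j = (if j < n then 1 / p (n - 1 - j) else 0)" for j
  have qpos: "\<forall>j<n. q j > 0" using ppos unfolding q_def by auto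
  have q1: "q 1 = q 0 ^ 2 - 1" if "1 \<le> n"
  proof (cases "n = 1")
    case True
    have "p 0 ^ 2 = 1" using p1 pn True by simp
    then show ?thesis using True unfolding q_def by (simp add: power_one_over)
  next
    case False
    then have n2: "n \<ge> 2" using that by auto
    have "p n + 1 = p (n-1)^2 * (1 + 1 / p (n-2))"
      using so[of "n-2"] n2 by (simp add: numeral_2_eq_2 Suc_diff_Suc)
    then have "1 = p (n-1)^2 * (1 + 1 / p (n-2))" using pn by simp
    moreover have "p (n-1) > 0" using ppos n2 by auto
    ultimately have "1 / p (n-1) ^ 2 - 1 = 1 / p (n-2)"
      by (simp add: field_simps)
    then show ?thesis using n2 unfolding q_def by (simp add: power_one_over numeral_2_eq_2)
  qed
  have rec: "\<forall>k. k + 2 \<le> n \<longrightarrow> q (k+2) + 1 = q (k+1)^2 * (1 + 1 / q k)"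
  proof (intro allI impI)
    fix k assume k: "k + 2 \<le> n"
    show "q (k+2) + 1 = q (k+1)^2 * (1 + 1 / q k)"
    proof (cases "k + 2 = n")
      case True
      have "q (k+2) = 0" "q (k+1) = 1 / p 0" "q k = 1 / p 1" using True unfolding q_def by auto
      moreover have "p 0 > 0" using ppos k by auto
      ultimately show ?thesis using p1 by (simp add: field_simps power2_eq_square)
    next
      case False
      define m where "m = n - 3 - k"
      have e: "n - 1 - (k+2) = m" "n - 1 - (k+1) = m + 1" "n - 1 - k = m + 2"
        using k False unfolding m_def by auto
      have qs: "q (k+2) = 1 / p m" "q (k+1) = 1 / p (m+1)" "q k = 1 / p (m+2)"
        using k False e unfolding q_def by auto
      have pp: "p m > 0" "p (m+1) > 0" using ppos k False unfolding m_def by auto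
      have "p (m+2) + 1 = p (m+1)^2 * (1 + 1 / p m)" using so[of m] k False unfolding m_def by auto
      then show ?thesis unfolding qs using pp by (simp add: field_simps power2_eq_square)
    qed
  qed
  have char: "P (q 0) j = q j" if "j \<le> n" for j
    using P_char[OF qpos _ rec] q1 that by blast
  have "n \<ge> 1" using assms by simp
  have ra: "\<forall>j<n. P (q 0) j > 0" using char qpos by auto
  have rb: "P (q 0) n = 0" using char[of n] by (simp add: q_def)
  have "rootp n (q 0)" unfolding rootp_def using ra rb by simp
  then have "q 0 = aa n" using aa_eq by simp
  then have "p j = q j" using char[of j] assms unfolding p_def by simp
  moreover have "p (n - 1 - j) > 0" using ppos assms by auto
  ultimately show ?thesis using assms unfolding q_def p_def
    by (simp add: field_simps)
qed

lemma aa_pos: "j < n \<Longrightarrow> P (aa n) j > 0" and aa_zero: "P (aa n) n = 0"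
  using aa_root[of n] unfolding rootp_def by auto

lemma R_lt1:
  assumes k: "1 \<le> k" "k < n"
  shows "R (aa n) k < 1"
proof (rule ccontr)
  define p where "p = P (aa n)"
  assume "\<not> R (aa n) k < 1"
  then have Rk: "R (aa n) k \<ge> 1" by simp
  have nontrap: False if "j \<le> n" "p j \<ge> 1" "R (aa n) j \<ge> 1" for j
    using invariant[of "aa n" j n] that aa_zero[of n] unfolding p_def by auto
  have pk: "p k > 0" "p (k-1) > 0" using aa_pos k unfolding p_def by auto
  have Rk': "R (aa n) k = p k / p (k-1)"
    using R_eq[of "aa n" "k-1"] pk k unfolding p_def by simp
  show False
  proof (cases "p k \<ge> 1")
    case True then show False using nontrap[of k] Rk k by simp
  next
    case False
    have le: "p (k-1) \<le> p k" using Rk Rk' pk by (simp add: le_divide_eq)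
    have s1: "p (k-1) * p (n - k) = 1" using sym_aa[of "k-1" n] k unfolding p_def
      by (simp add: Suc_diff_Suc)
    have s2: "p k * p (n - k - 1) = 1" using sym_aa[of k n] k unfolding p_def by simp
    have pnk: "p (n-k-1) > 0" using aa_pos[of "n-k-1" n] k unfolding p_def by simp
    have Rj: "R (aa n) (n-k) = p (n-k) / p (n-k-1)"
      using R_eq[of "aa n" "n-k-1"] pnk k unfolding p_def by (simp add: Suc_diff_Suc)
    have e1: "p (n-k) = 1 / p (k-1)" "p (n-k-1) = 1 / p k" using s1 s2 pk
      by (simp_all add: field_simps)
    have "R (aa n) (n-k) = (1 / p (k-1)) / (1 / p k)" using Rj e1 by simp
    also have "\<dots> = p k / p (k-1)" using pk by (simp add: field_simps)
    finally have "R (aa n) (n-k) = R (aa n) k" using Rk' by simp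
    moreover have "p (n-k) \<ge> 1" using \<open>p (n-k) = 1 / p (k-1)\<close> le False pk by simp
    ultimately show False using nontrap[of "n-k"] Rk by simp
  qed
qed

lemma aa_dec: assumes "Suc k \<le> n" shows "P (aa n) (Suc k) < P (aa n) k"
proof (cases "Suc k = n")
  case True then show ?thesis using aa_zero[of n] aa_pos[of k n] by simp
next
  case False
  then have "Suc k < n" using assms by simp
  have pk: "P (aa n) k > 0" using aa_pos assms by simp
  have "R (aa n) (Suc k) < 1" using R_lt1[of "Suc k" n] \<open>Suc k < n\<close> by simp
  then have "P (aa n) (Suc k) / P (aa n) k < 1" using R_eq[of "aa n" k] pk by simp
  then show ?thesis using pk by (simp add: divide_less_eq)
qed

lemma aa_antitone: assumes "i \<le> j" "j \<le> n" shows "P (aa n) j \<le> P (aa n) i"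
  using assms
proof (induction j)
  case 0 then show ?case by simp
next
  case (Suc j)
  show ?case
  proof (cases "i = Suc j")
    case True then show ?thesis by simp
  next
    case False
    then have "P (aa n) j \<le> P (aa n) i" using Suc by simp
    moreover have "P (aa n) (Suc j) < P (aa n) j" using aa_dec Suc.prems by simp
    ultimately show ?thesis by simp
  qed
qed

lemma aa_ge1: assumes "2 * j + 1 \<le> n" shows "P (aa n) j \<ge> 1"
proof -
  have s: "P (aa n) j * P (aa n) (n - 1 - j) = 1" using sym_aa assms by simp
  have "P (aa n) (n - 1 - j) \<le> P (aa n) j" using aa_antitone assms by simp
  moreover have "P (aa n) j > 0" using aa_pos assms by simp
  ultimately have "1 \<le> P (aa n) j * P (aa n) j" using s
    by (metis mult_left_mono less_imp_le)
  show ?thesis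
  proof (rule ccontr)
    assume "\<not> 1 \<le> P (aa n) j"
    then have "P (aa n) j * P (aa n) j < 1 * 1" using \<open>P (aa n) j > 0\<close>
      by (intro mult_strict_mono) auto
    then show False using \<open>1 \<le> P (aa n) j * P (aa n) j\<close> by simp
  qed
qed

lemma sum_ivl_filter:
  fixes i j n :: nat
  assumes "1 \<le> i" "j \<le> n"
  shows "(\<Sum>l=i..j. g l) = (\<Sum>l=1..n. if i \<le> l \<and> l \<le> j then g l else (0::real))"
proof -
  have "{l\<in>{1..n}. i \<le> l \<and> l \<le> j} = {i..j}" using assms by auto
  then show ?thesis using sum.inter_filter[of "{1..n}" g "\<lambda>l. i \<le> l \<and> l \<le> j"] by simp
qed

lemma exch:
  fixes Q :: "nat \<Rightarrow> nat \<Rightarrow> real" and d :: "nat \<Rightarrow> real"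
  shows "(\<Sum>i=1..n. \<Sum>j=i..n. Q i j * (\<Sum>l=i..j. d l))
       = (\<Sum>l=1..n. d l * (\<Sum>i=1..l. \<Sum>j=l..n. Q i j))"
proof -
  define G where "G i j l = (if i \<le> l \<and> l \<le> j then Q i j * d l else 0)" for i j l
  have L: "(\<Sum>j=i..n. Q i j * (\<Sum>l=i..j. d l)) = (\<Sum>j=1..n. \<Sum>l=1..n. G i j l)"
    if i: "i \<in> {1..n}" for i
  proof -
    have "(\<Sum>j=i..n. Q i j * (\<Sum>l=i..j. d l))
        = (\<Sum>j=1..n. if i \<le> j \<and> j \<le> n then Q i j * (\<Sum>l=i..j. d l) else 0)"
      using sum_ivl_filter[of i n n] i by auto
    also have "\<dots> = (\<Sum>j=1..n. \<Sum>l=1..n. G i j l)"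
    proof (rule sum.cong)
      fix j assume j: "j \<in> {1..n}"
      show "(if i \<le> j \<and> j \<le> n then Q i j * (\<Sum>l=i..j. d l) else 0) = (\<Sum>l=1..n. G i j l)"
      proof (cases "i \<le> j")
        case True
        then have "Q i j * (\<Sum>l=i..j. d l) = Q i j * (\<Sum>l=1..n. if i \<le> l \<and> l \<le> j then d l else 0)"
          using sum_ivl_filter[of i j n d] i j by auto
        also have "\<dots> = (\<Sum>l=1..n. G i j l)" unfolding G_def sum_distrib_left
          by (rule sum.cong) auto
        finally show ?thesis using True j by simp
      next
        case False then show ?thesis unfolding G_def by (auto intro!: sum.neutral)
      qed
    qed simp
    finally show ?thesis .
  qed
  have R: "d l * (\<Sum>i=1..l. \<Sum>j=l..n. Q i j) = (\<Sum>i=1..n. \<Sum>j=1..n. G i j l)"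
    if l: "l \<in> {1..n}" for l
  proof -
    have "d l * (\<Sum>i=1..l. \<Sum>j=l..n. Q i j) = (\<Sum>i=1..l. \<Sum>j=l..n. Q i j * d l)"
      by (simp add: sum_distrib_left sum_distrib_right mult.commute)
    also have "\<dots> = (\<Sum>i=1..n. if 1 \<le> i \<and> i \<le> l then (\<Sum>j=l..n. Q i j * d l) else 0)"
      using sum_ivl_filter[of 1 l n] l by auto
    also have "\<dots> = (\<Sum>i=1..n. \<Sum>j=1..n. G i j l)"
    proof (rule sum.cong)
      fix i assume i: "i \<in> {1..n}"
      show "(if 1 \<le> i \<and> i \<le> l then (\<Sum>j=l..n. Q i j * d l) else 0) = (\<Sum>j=1..n. G i j l)"
      proof (cases "i \<le> l")
        case True
        have "(\<Sum>j=l..n. Q i j * d l) = (\<Sum>j=1..n. if l \<le> j \<and> j \<le> n then Q i j * d l else 0)"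
          using sum_ivl_filter[of l n n] l by auto
        also have "\<dots> = (\<Sum>j=1..n. G i j l)" unfolding G_def
          by (rule sum.cong) (use True in auto)
        finally show ?thesis using True i by simp
      next
        case False then show ?thesis unfolding G_def by simp
      qed
    qed simp
    finally show ?thesis .
  qed
  have "(\<Sum>i=1..n. \<Sum>j=i..n. Q i j * (\<Sum>l=i..j. d l)) = (\<Sum>i=1..n. \<Sum>j=1..n. \<Sum>l=1..n. G i j l)"
    using L by (rule sum.cong[OF refl])
  also have "\<dots> = (\<Sum>i=1..n. \<Sum>l=1..n. \<Sum>j=1..n. G i j l)"
    by (rule sum.cong[OF refl], rule sum.swap)
  also have "\<dots> = (\<Sum>l=1..n. \<Sum>i=1..n. \<Sum>j=1..n. G i j l)"
    by (rule sum.swap)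
  also have "\<dots> = (\<Sum>l=1..n. d l * (\<Sum>i=1..l. \<Sum>j=l..n. Q i j))"
    using R by (intro sum.cong) auto
  finally show ?thesis .
qed

lemma tang:
  fixes y c :: real
  assumes "0 < y" "0 < c"
  shows "c + c * (ln y - ln c) \<le> y"
proof -
  have "ln (y / c) \<le> y / c - 1" using assms by (intro ln_le_minus_one) simp
  then have "c * ln (y / c) \<le> c * (y / c - 1)" using assms by (intro mult_left_mono) auto
  moreover have "ln (y / c) = ln y - ln c" using assms by (simp add: ln_div)
  moreover have "c * (y / c - 1) = y - c" using assms by (simp add: field_simps)
  ultimately show ?thesis by simp
qed

lemma ln_prod_inv:
  assumes "\<forall>l\<in>{i..j}. (x::nat \<Rightarrow> real) l > 0"
  shows "ln (\<Prod>l=i..j. 1 / x l) = - (\<Sum>l=i..j. ln (x l))"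
proof -
  have "ln (\<Prod>l=i..j. 1 / x l) = (\<Sum>l=i..j. ln (1 / x l))"
  proof (rule ln_prod)
    fix l assume "l \<in> {i..j}"
    then have "x l > 0" using assms by blast
    then show "1 / x l \<noteq> 0" by simp
  qed simp
  also have "\<dots> = (\<Sum>l=i..j. - ln (x l))"
    using assms by (intro sum.cong) (auto simp: ln_div)
  finally show ?thesis by (simp add: sum_negf)
qed

lemma lower_cert:
  fixes n :: nat and xs x :: "nat \<Rightarrow> real"
  assumes xs_pos: "\<forall>i\<in>{1..n}. xs i > 0" and x_pos: "\<forall>i\<in>{1..n}. x i > 0"
    and crit: "\<forall>k\<in>{1..n}. xs k = (\<Sum>i=1..k. \<Sum>j=k..n. \<Prod>l=i..j. 1 / xs l)"
  shows "f_fun n xs \<le> f_fun n x"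
proof -
  define d where "d l = ln (x l) - ln (xs l)" for l
  define Q where "Q i j = (\<Prod>l=i..j. 1 / xs l)" for i j
  have h1: "xs i + xs i * d i \<le> x i" if "i \<in> {1..n}" for i
    unfolding d_def using tang[of "x i" "xs i"] xs_pos x_pos that by auto
  have h2: "Q i j - Q i j * (\<Sum>l=i..j. d l) \<le> (\<Prod>l=i..j. 1 / x l)"
    if "i \<in> {1..n}" "j \<in> {i..n}" for i j
  proof -
    have px: "\<forall>l\<in>{i..j}. x l > 0" and pxs: "\<forall>l\<in>{i..j}. xs l > 0"
      using that xs_pos x_pos by auto
    have y: "(\<Prod>l=i..j. 1 / x l) > 0" using px by (intro prod_pos) auto
    have c: "Q i j > 0" unfolding Q_def using pxs by (intro prod_pos) auto
    have "ln (\<Prod>l=i..j. 1 / x l) - ln (Q i j) = - (\<Sum>l=i..j. d l)"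
      unfolding Q_def d_def using ln_prod_inv[OF px] ln_prod_inv[OF pxs]
      by (simp add: sum_subtractf)
    then show ?thesis using tang[OF y c] by simp
  qed
  have "(\<Sum>i=1..n. xs i + xs i * d i) + (\<Sum>i=1..n. \<Sum>j=i..n. Q i j - Q i j * (\<Sum>l=i..j. d l))
      \<le> f_fun n x"
    unfolding f_fun_def
    by (intro add_mono sum_mono h1 h2) auto
  moreover have "(\<Sum>i=1..n. \<Sum>j=i..n. Q i j * (\<Sum>l=i..j. d l)) = (\<Sum>l=1..n. d l * xs l)"
    unfolding exch using crit by (intro sum.cong) (auto simp: Q_def)
  ultimately have "f_fun n xs + (\<Sum>i=1..n. xs i * d i) - (\<Sum>l=1..n. d l * xs l) \<le> f_fun n x"
    unfolding f_fun_def Q_def by (simp add: sum.distrib sum_subtractf)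
  then show ?thesis by (simp add: mult.commute)
qed

lemma prod_split:
  fixes f :: "nat \<Rightarrow> real"
  assumes "i \<le> k" "k \<le> j"
  shows "prod f {i..j} = prod f {i..k} * prod f {Suc k..j}"
proof -
  have "{i..j} = {i..k} \<union> {Suc k..j}" using assms by auto
  moreover have "{i..k} \<inter> {Suc k..j} = {}" by auto
  ultimately show ?thesis by (simp add: prod.union_disjoint)
qed

context
  fixes n :: nat
  assumes n1: "1 \<le> n"
begin

definition xs :: "nat \<Rightarrow> real" where "xs k = P (aa n) (k-1) + R (aa n) (k-1)"

lemma xs_pos: "k \<in> {1..n} \<Longrightarrow> xs k > 0"
proof -
  assume k: "k \<in> {1..n}"
  have "P (aa n) (k-1) > 0" using aa_pos k by auto
  moreover have "R (aa n) (k-1) \<ge> 0" using R_nonneg[of "k-1" "aa n"] aa_pos[of _ n] k by auto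
  ultimately show ?thesis unfolding xs_def by simp
qed

lemma g_formula: "1 \<le> k \<Longrightarrow> k \<le> n \<Longrightarrow> (\<Sum>i=1..k. \<Prod>l=i..k. 1 / xs l) = 1 / P (aa n) (k-1)"
proof (induction k)
  case 0 then show ?case by simp
next
  case (Suc k)
  show ?case
  proof (cases "k = 0")
    case True then show ?thesis by (simp add: xs_def)
  next
    case False
    have IH: "(\<Sum>i=1..k. \<Prod>l=i..k. 1 / xs l) = 1 / P (aa n) (k-1)" using Suc False by simp
    have pk: "P (aa n) k > 0" "P (aa n) (k-1) > 0" using aa_pos Suc.prems by auto
    have Rk: "R (aa n) k = P (aa n) k / P (aa n) (k-1)"
      using R_eq[of "aa n" "k-1"] pk False by simp
    have s1: "(\<Sum>i=1..Suc k. \<Prod>l=i..Suc k. 1 / xs l)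
        = (\<Sum>i=1..k. \<Prod>l=i..Suc k. 1 / xs l) + (\<Prod>l=Suc k..Suc k. 1 / xs l)"
      by (simp only: sum.cl_ivl_Suc) simp
    have s2: "(\<Sum>i=1..k. \<Prod>l=i..Suc k. 1 / xs l) = (\<Sum>i=1..k. (\<Prod>l=i..k. 1 / xs l) * (1 / xs (Suc k)))"
      by (intro sum.cong refl) (simp only: prod.cl_ivl_Suc, simp)
    have "(\<Sum>i=1..Suc k. \<Prod>l=i..Suc k. 1 / xs l)
        = (\<Sum>i=1..k. (\<Prod>l=i..k. 1 / xs l) * (1 / xs (Suc k))) + 1 / xs (Suc k)"
      using s1 s2 by simp
    also have "\<dots> = (1 / P (aa n) (k-1) + 1) / xs (Suc k)"
      by (simp only: sum_distrib_right[symmetric] IH) (simp add: add_divide_distrib)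
    also have "\<dots> = 1 / P (aa n) k"
    proof -
      have xsS: "xs (Suc k) = P (aa n) k * (1 / P (aa n) (k-1) + 1)"
        unfolding xs_def using pk by (simp add: Rk field_simps)
      have "1 / P (aa n) (k-1) + 1 > 0" using pk by (simp add: add_pos_pos)
      then show ?thesis unfolding xsS using pk by simp
    qed
    finally show ?thesis by simp
  qed
qed

lemma h_formula_aux:
  "\<forall>k. n + 1 - k = m \<longrightarrow> 1 \<le> k \<longrightarrow> k \<le> n + 1 \<longrightarrow>
     (\<Sum>j=k..n. \<Prod>l=k..j. 1 / xs l) = P (aa n) (k-1)"
proof (induction m)
  case 0
  show ?case
  proof (intro allI impI)
    fix k assume "n + 1 - k = 0" "1 \<le> k" "k \<le> n + 1"
    then have "k = n + 1" by simp
    then show "(\<Sum>j=k..n. \<Prod>l=k..j. 1 / xs l) = P (aa n) (k-1)" using aa_zero[of n] by simp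
  qed
next
  case (Suc m)
  show ?case
  proof (intro allI impI)
    fix k assume k: "n + 1 - k = Suc m" "1 \<le> k" "k \<le> n + 1"
    then have kn: "k \<le> n" by simp
    have IH: "(\<Sum>j=Suc k..n. \<Prod>l=Suc k..j. 1 / xs l) = P (aa n) k"
      using Suc.IH[rule_format, of "Suc k"] k by simp
    have "(\<Sum>j=k..n. \<Prod>l=k..j. 1 / xs l) = 1 / xs k + (\<Sum>j=Suc k..n. \<Prod>l=k..j. 1 / xs l)"
      using kn by (simp add: sum.atLeast_Suc_atMost)
    also have "(\<Sum>j=Suc k..n. \<Prod>l=k..j. 1 / xs l) = (\<Sum>j=Suc k..n. 1 / xs k * (\<Prod>l=Suc k..j. 1 / xs l))"
      by (intro sum.cong) (auto simp: prod.atLeast_Suc_atMost)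
    also have "\<dots> = 1 / xs k * P (aa n) k" by (simp only: sum_distrib_left[symmetric] IH)
    finally have e: "(\<Sum>j=k..n. \<Prod>l=k..j. 1 / xs l) = (1 + P (aa n) k) / xs k"
      by (simp add: add_divide_distrib)
    have xk: "xs k > 0" using xs_pos k kn by simp
    have "P (aa n) k = P (aa n) (k-1) * xs k - 1"
      unfolding xs_def using P_Suc[of "aa n" "k-1"] k by simp
    then show "(\<Sum>j=k..n. \<Prod>l=k..j. 1 / xs l) = P (aa n) (k-1)" using e xk by simp
  qed
qed

lemma h_formula: "1 \<le> k \<Longrightarrow> k \<le> n + 1 \<Longrightarrow> (\<Sum>j=k..n. \<Prod>l=k..j. 1 / xs l) = P (aa n) (k-1)"
  using h_formula_aux by blast

lemma crit: "k \<in> {1..n} \<Longrightarrow> xs k = (\<Sum>i=1..k. \<Sum>j=k..n. \<Prod>l=i..j. 1 / xs l)"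
proof -
  assume k: "k \<in> {1..n}"
  have "(\<Sum>i=1..k. \<Sum>j=k..n. \<Prod>l=i..j. 1 / xs l)
      = (\<Sum>i=1..k. \<Sum>j=k..n. (\<Prod>l=i..k. 1 / xs l) * (\<Prod>l=Suc k..j. 1 / xs l))"
    by (intro sum.cong refl) (auto intro: prod_split)
  also have "\<dots> = (\<Sum>i=1..k. \<Prod>l=i..k. 1 / xs l) * (\<Sum>j=k..n. \<Prod>l=Suc k..j. 1 / xs l)"
    by (simp add: sum_product)
  also have "(\<Sum>j=k..n. \<Prod>l=Suc k..j. 1 / xs l) = 1 + (\<Sum>j=Suc k..n. \<Prod>l=Suc k..j. 1 / xs l)"
    using k by (simp add: sum.atLeast_Suc_atMost)
  also have "\<dots> = 1 + P (aa n) k" using h_formula[of "Suc k"] k by simp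
  finally have e: "(\<Sum>i=1..k. \<Sum>j=k..n. \<Prod>l=i..j. 1 / xs l) = 1 / P (aa n) (k-1) * (1 + P (aa n) k)"
    using g_formula[of k] k by simp
  have pk: "P (aa n) (k-1) > 0" using aa_pos k by auto
  have "P (aa n) k = P (aa n) (k-1) * xs k - 1"
    unfolding xs_def using P_Suc[of "aa n" "k-1"] k by simp
  then show ?thesis using e pk by simp
qed

lemma f_xs: "f_fun n xs = (\<Sum>j<n. 2 * P (aa n) j + R (aa n) j)"
proof -
  have "f_fun n xs = (\<Sum>i=1..n. xs i) + (\<Sum>i=1..n. P (aa n) (i-1))"
    unfolding f_fun_def using h_formula by (intro arg_cong2[where f="(+)"] sum.cong) auto
  also have "\<dots> = (\<Sum>j<n. xs (Suc j)) + (\<Sum>j<n. P (aa n) j)"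
    by (simp only: One_nat_def sum.atLeast1_atMost_eq) simp
  also have "\<dots> = (\<Sum>j<n. xs (Suc j) + P (aa n) j)"
    by (rule sum.distrib[symmetric])
  also have "\<dots> = (\<Sum>j<n. 2 * P (aa n) j + R (aa n) j)"
    by (intro sum.cong refl) (simp add: xs_def)
  finally show ?thesis .
qed

lemma A_val_eq: "A_val n = (\<Sum>j<n. 2 * P (aa n) j + R (aa n) j)"
proof -
  have mem: "xs \<in> {x. \<forall>i\<in>{1..n}. x i > 0}" using xs_pos by auto
  have "A_val n = f_fun n xs"
    unfolding A_val_def
  proof (rule cInf_eq_minimum)
    show "f_fun n xs \<in> f_fun n ` {x. \<forall>i\<in>{1..n}. x i > 0}" using mem by blast
    fix y assume "y \<in> f_fun n ` {x. \<forall>i\<in>{1..n}. x i > 0}"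
    then obtain x where "\<forall>i\<in>{1..n}. x i > 0" "y = f_fun n x" by auto
    then show "f_fun n xs \<le> y" using lower_cert[of n xs x] xs_pos crit by auto
  qed
  then show ?thesis using f_xs by simp
qed

lemma C_val_eq: "C_val n = (\<Sum>j<n. 3 - 2 * P (aa n) j - R (aa n) j)"
  unfolding C_val_def A_val_eq by (simp add: sum_subtractf sum.distrib)

end

lemma Phi_eq: "Phi (p, u) = (p^2 * (u + 1) - 1, 1 / p)"
  by (simp add: Phi_def)

lemma traj_is:
  assumes "1 \<le> n"
  shows "is_traj n (P (aa n)) (\<lambda>j. if j = 0 then 0 else 1 / P (aa n) (j-1))"
  unfolding is_traj_def
proof (intro conjI allI impI ballI)
  show "P (aa n) n = 0" by (rule aa_zero)
  fix j assume "j < n" then show "P (aa n) j > 0" by (rule aa_pos)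
next
  fix j assume j: "j \<in> {1..n}"
  then obtain m where m: "j = Suc m" by (cases j) auto
  have pm: "P (aa n) m > 0" using aa_pos j m by auto
  show "P (aa n) (j - 1) \<noteq> 0" using pm m by simp
  have r: "R (aa n) m = P (aa n) m * (if m = 0 then 0 else 1 / P (aa n) (m-1))"
  proof (cases m)
    case 0 then show ?thesis by simp
  next
    case (Suc i)
    have "P (aa n) i > 0" using aa_pos j m Suc by auto
    then show ?thesis using R_eq[of "aa n" i] Suc by simp
  qed
  show "(P (aa n) j, if j = 0 then 0 else 1 / P (aa n) (j - 1)) =
        Phi (P (aa n) (j - 1), if j - 1 = 0 then 0 else 1 / P (aa n) (j - 1 - 1))"
    unfolding Phi_eq m using r
    by (simp add: P_Suc power2_eq_square algebra_simps)
qed simp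

lemma traj_P:
  assumes t: "is_traj n p u"
  shows "j \<le> n \<Longrightarrow> p j = P (p 0) j \<and> R (p 0) j = p j * u j"
proof (induction j)
  case 0 then show ?case using t unfolding is_traj_def by simp
next
  case (Suc j)
  have IH: "p j = P (p 0) j" "R (p 0) j = p j * u j" using Suc by auto
  have tt: "\<forall>j<n. p j > 0" "\<forall>j\<in>{1..n}. p (j-1) \<noteq> 0 \<and> (p j, u j) = Phi (p (j-1), u (j-1))"
    using t unfolding is_traj_def by auto
  have pj: "p j \<noteq> 0" using tt(1)[rule_format, of j] Suc.prems by (simp add: Suc_le_eq)
  have s: "Suc j \<in> {1..n}" using Suc.prems by simp
  have "(p (Suc j), u (Suc j)) = Phi (p j, u j)"
    using tt(2)[rule_format, OF s] by simp
  then have e: "p (Suc j) = p j ^ 2 * (u j + 1) - 1" "u (Suc j) = 1 / p j"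
    unfolding Phi_eq by auto
  have 1: "p (Suc j) = P (p 0) (Suc j)"
    unfolding P_Suc IH(2) IH(1)[symmetric] e by (simp add: power2_eq_square algebra_simps)
  have 2: "R (p 0) (Suc j) = p (Suc j) * u (Suc j)"
    unfolding R_Suc IH(2) IH(1)[symmetric] e using pj by (simp add: field_simps power2_eq_square)
  show ?case using 1 2 by simp
qed

lemma traj_aa:
  assumes t: "is_traj n p u"
  shows "p 0 = aa n"
proof -
  have tt: "\<forall>j<n. p j > 0" "p n = 0" using t unfolding is_traj_def by auto
  have a: "\<forall>j<n. P (p 0) j > 0"
  proof (intro allI impI)
    fix j assume "j < n"
    then show "P (p 0) j > 0" using traj_P[OF t, of j] tt(1)[rule_format, of j] by simp
  qed
  have b: "P (p 0) n = 0" using traj_P[OF t, of n] tt(2) by simp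
  have "rootp n (p 0)" unfolding rootp_def using a b by simp
  then show ?thesis using aa_eq by simp
qed

lemma p_traj_eq:
  assumes "1 \<le> n" "j \<le> n"
  shows "p_traj j n = P (aa n) j"
  unfolding p_traj_def
proof (rule the_equality)
  show "\<exists>p u. is_traj n p u \<and> p j = P (aa n) j" using traj_is[OF assms(1)] by blast
next
  fix x assume "\<exists>p u. is_traj n p u \<and> p j = x"
  then obtain p u where t: "is_traj n p u" "p j = x" by blast
  then show "x = P (aa n) j" using traj_P[OF t(1) assms(2)] traj_aa[OF t(1)] by simp
qed

definition astar :: real where "astar = lim aa"

lemma aa_conv_ex: "aa \<longlonglongrightarrow> astar \<and> (\<forall>n. aa n \<le> astar)"
proof -
  have "incseq aa" by (rule incseq_SucI) (simp add: aa_mono less_imp_le)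
  moreover have "\<forall>i. aa i \<le> 2" using aa_lt2 less_imp_le by blast
  ultimately obtain L where L: "aa \<longlonglongrightarrow> L" "\<forall>i. aa i \<le> L" by (rule incseq_convergent)
  then have "astar = L" unfolding astar_def by (simp add: limI)
  then show ?thesis using L by simp
qed

lemma aa_conv: "aa \<longlonglongrightarrow> astar" using aa_conv_ex by simp

lemma aa_lt_astar: "aa n < astar"
  using aa_mono[of n] aa_conv_ex by (meson less_le_trans)

lemma astar_le2: "astar \<le> 2"
  using LIMSEQ_le_const2[OF aa_conv] aa_lt2 less_imp_le by blast

lemma aa_ge_one: "1 \<le> n \<Longrightarrow> 1 \<le> aa n"
  using aa_ge1[of 0 n] by simp

lemma astar_ge1: "1 \<le> astar"
  using aa_ge_one[of 1] aa_lt_astar[of 1] by simp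

lemma Pstar_gt: "j \<le> n \<Longrightarrow> P (aa n) j < P astar j \<and> R (aa n) j \<le> R astar j"
  using mono_ab[of "aa n" astar j] aa_lt_astar aa_pos[of _ n] by auto

lemma Pstar_pos: "P astar j > 0"
  using Pstar_gt[of j "Suc j"] aa_pos[of j "Suc j"] by simp

lemma conv_PR: "(\<lambda>n. P (aa n) j) \<longlonglongrightarrow> P astar j \<and> (\<lambda>n. R (aa n) j) \<longlonglongrightarrow> R astar j"
proof -
  have "isCont (\<lambda>b. P b j) astar \<and> isCont (\<lambda>b. R b j) astar"
    using cont_PR[of j astar] Pstar_pos by (simp add: less_imp_neq[symmetric])
  then show ?thesis using isCont_tendsto_compose[OF _ aa_conv] by blast
qed

lemma Pstar_dec: "P astar (Suc j) \<le> P astar j"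
proof (rule LIMSEQ_le)
  show "(\<lambda>n. P (aa n) (Suc j)) \<longlonglongrightarrow> P astar (Suc j)" "(\<lambda>n. P (aa n) j) \<longlonglongrightarrow> P astar j"
    using conv_PR by auto
  show "\<exists>N. \<forall>n\<ge>N. P (aa n) (Suc j) \<le> P (aa n) j"
    using aa_dec less_imp_le by blast
qed

lemma Pstar_ge1: "1 \<le> P astar j"
proof (rule LIMSEQ_le_const)
  show "(\<lambda>n. P (aa n) j) \<longlonglongrightarrow> P astar j" using conv_PR by auto
  show "\<exists>N. \<forall>n\<ge>N. 1 \<le> P (aa n) j" using aa_ge1 by blast
qed

lemma rate_alg:
  fixes q s :: real
  assumes q: "1 \<le> q" and s: "0 < s" and h: "q^2 * (1 + 1/s) \<le> q + 1"
  shows "3 * (q - 1) \<le> s - 1"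
proof -
  define w where "w = q + 1 - q^2"
  have "q^2 * (s + 1) \<le> (q + 1) * s"
    using h s by (simp add: field_simps)
  then have sw: "q^2 \<le> s * w" unfolding w_def by (simp add: algebra_simps)
  have "q^2 > 0" using q by simp
  then have "s * w > 0" using sw by linarith
  then have wpos: "w > 0" using s by (simp add: zero_less_mult_iff)
  have "q^2 - (3*q - 2) * w = (q - 1)^2 * (3*q + 2)"
    unfolding w_def by (simp add: algebra_simps power2_eq_square)
  moreover have "(q - 1)^2 * (3*q + 2) \<ge> 0" using q by simp
  ultimately have "(3*q - 2) * w \<le> s * w" using sw by linarith
  then have "3*q - 2 \<le> s" using wpos by simp
  then show ?thesis by simp
qed

lemma Pstar_rate: "P astar (Suc j) - 1 \<le> (P astar j - 1) / 3"
proof -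
  have so: "P astar (Suc (Suc j)) + 1 = P astar (Suc j) ^ 2 * (1 + 1 / P astar j)"
    using second_order[of astar j] Pstar_pos[of j] by simp
  have "P astar (Suc j) ^ 2 * (1 + 1 / P astar j) \<le> P astar (Suc j) + 1"
    using so Pstar_dec[of "Suc j"] by simp
  then have "3 * (P astar (Suc j) - 1) \<le> P astar j - 1"
    using rate_alg Pstar_ge1 Pstar_pos by blast
  then show ?thesis by simp
qed

lemma dstar: "P astar j - 1 \<le> (1/3)^j"
proof (induction j)
  case 0 then show ?case using astar_le2 by simp
next
  case (Suc j)
  have "P astar (Suc j) - 1 \<le> (P astar j - 1) / 3" by (rule Pstar_rate)
  also have "\<dots> \<le> (1/3)^j / 3" using Suc by simp
  finally show ?case by simp
qed

lemma core:
  fixes d e p r :: real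
  assumes "0 \<le> d" "0 \<le> e" "1 / (1 + e) \<le> p" "p \<le> 1 + d" "1 / (1 + e)^2 \<le> r" "r \<le> 1"
  shows "\<bar>3 - 2*p - r\<bar> \<le> 2*d + 4*e \<and> \<bar>p - 1\<bar> \<le> d + e \<and> \<bar>r - 1\<bar> \<le> 2*e"
proof -
  have "(1 - e) * (1 + e) \<le> 1" by (simp add: algebra_simps)
  then have a: "1 - e \<le> 1 / (1 + e)" using assms(2) by (simp add: le_divide_eq)
  have "(1 - 2*e) * (1 + e)^2 \<le> 1"
  proof -
    have "(1 - 2*e) * (1 + e)^2 = 1 - 3*e^2 - 2*e^3" by (simp add: algebra_simps power2_eq_square power3_eq_cube)
    moreover have "0 \<le> 3*e^2 + 2*e^3" using assms(2) by simp
    ultimately show ?thesis by linarith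
  qed
  then have b: "1 - 2*e \<le> 1 / (1 + e)^2" using assms(2) by (simp add: le_divide_eq)
  show ?thesis using a b assms by (auto simp: abs_if)
qed

lemma interval_n:
  assumes "1 \<le> j" "2 * j \<le> n"
  shows "1 / P astar (j-1) \<le> P (aa n) j \<and> P (aa n) j \<le> P astar j \<and>
         1 / (P astar (j-1))^2 \<le> R (aa n) j \<and> R (aa n) j \<le> 1"
proof -
  let ?p = "P (aa n)"
  have jn: "j < n" using assms by simp
  have s: "?p j * ?p (n - 1 - j) = 1" using sym_aa jn by simp
  have pos: "?p (n-1-j) > 0" "?p j > 0" "?p (j-1) > 0" using aa_pos jn by auto
  have "?p (n-1-j) \<le> ?p (j-1)" using aa_antitone[of "j-1" "n-1-j" n] assms by simp
  also have "\<dots> \<le> P astar (j-1)"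
  proof -
    have "j - 1 \<le> n" using assms by simp
    then show ?thesis using Pstar_gt[of "j-1" n] by simp
  qed
  finally have le1: "?p (n-1-j) \<le> P astar (j-1)" .
  have pj: "?p j = 1 / ?p (n-1-j)" using s pos by (simp add: field_simps)
  have A: "1 / P astar (j-1) \<le> ?p j" unfolding pj using le1 pos by (simp add: frac_le)
  have B: "?p j \<le> P astar j" using Pstar_gt[of j n] jn by simp
  have Rj: "R (aa n) j = ?p j / ?p (j-1)" using R_eq[of "aa n" "j-1"] pos assms by simp
  have dec: "?p j \<le> ?p (j-1)" using aa_antitone[of "j-1" j n] jn by simp
  have C: "R (aa n) j \<le> 1" unfolding Rj using dec pos by simp
  have jn1: "j - 1 \<le> n" using jn by simp
  have "?p (j-1) < P astar (j-1)" using Pstar_gt[OF jn1] by blast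
  then have pj1: "?p (j-1) \<le> P astar (j-1)" by simp
  have "1 / (P astar (j-1))^2 = (1 / P astar (j-1)) / P astar (j-1)" by (simp add: power2_eq_square)
  also have "\<dots> \<le> ?p j / P astar (j-1)"
    by (rule divide_right_mono[OF A]) (simp add: less_imp_le[OF Pstar_pos])
  also have "\<dots> \<le> ?p j / ?p (j-1)" using pj1 pos by (simp add: frac_le)
  finally have D: "1 / (P astar (j-1))^2 \<le> R (aa n) j" unfolding Rj .
  show ?thesis using A B C D by simp
qed

lemma interval_star:
  assumes "1 \<le> j"
  shows "1 / P astar (j-1) \<le> P astar j \<and> P astar j \<le> P astar j \<and>
         1 / (P astar (j-1))^2 \<le> R astar j \<and> R astar j \<le> 1"
proof -
  have pos: "P astar (j-1) > 0" "P astar j > 0" using Pstar_pos by auto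
  have ge: "1 \<le> P astar (j-1)" "1 \<le> P astar j" using Pstar_ge1 by auto
  have Rj: "R astar j = P astar j / P astar (j-1)" using R_eq[of astar "j-1"] pos assms by simp
  have dec: "P astar j \<le> P astar (j-1)" using Pstar_dec[of "j-1"] assms by simp
  have A: "1 / P astar (j-1) \<le> P astar j" using ge pos by (meson divide_le_eq_1 less_le_trans zero_less_one order_trans)
  have C: "R astar j \<le> 1" unfolding Rj using dec pos by simp
  have "1 / (P astar (j-1))^2 \<le> 1 / P astar (j-1)"
    using ge pos by (simp add: power2_eq_square frac_le)
  also have "\<dots> \<le> P astar j / P astar (j-1)" using ge pos by (simp add: divide_right_mono)
  finally have D: "1 / (P astar (j-1))^2 \<le> R astar j" unfolding Rj .
  show ?thesis using A C D by simp
qed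

definition tt :: "real \<Rightarrow> nat \<Rightarrow> real" where "tt a j = 3 - 2 * P a j - R a j"

lemma bounds_from_interval:
  assumes j: "1 \<le> j" and I: "1 / P astar (j-1) \<le> p \<and> p \<le> P astar j \<and> 1 / (P astar (j-1))^2 \<le> r \<and> r \<le> 1"
  shows "\<bar>3 - 2*p - r\<bar> \<le> 14 * (1/3)^j \<and> \<bar>p - 1\<bar> \<le> 4 * (1/3)^j \<and> \<bar>r - 1\<bar> \<le> 6 * (1/3)^j"
proof -
  define d where "d = P astar j - 1"
  define e where "e = P astar (j-1) - 1"
  have d0: "0 \<le> d" "d \<le> (1/3)^j" unfolding d_def using Pstar_ge1 dstar by auto
  have e0: "0 \<le> e" "e \<le> (1/3)^(j-1)" unfolding e_def using Pstar_ge1 dstar by auto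
  have "(1/3::real)^j = (1/3)^(j-1) / 3" using j by (cases j) auto
  then have e1: "e \<le> 3 * (1/3)^j" using e0 by simp
  have c: "\<bar>3 - 2*p - r\<bar> \<le> 2*d + 4*e \<and> \<bar>p - 1\<bar> \<le> d + e \<and> \<bar>r - 1\<bar> \<le> 2*e"
    using core[of d e p r] d0 e0 I unfolding d_def e_def by simp
  show ?thesis using c d0 e1 by linarith
qed

lemma bound_n:
  assumes "1 \<le> n" "2 * j \<le> n"
  shows "\<bar>tt (aa n) j\<bar> \<le> 14 * (1/3)^j"
proof (cases "j = 0")
  case True
  then show ?thesis using aa_ge_one[OF assms(1)] aa_lt2[of n] by (simp add: tt_def)
next
  case False
  then show ?thesis using bounds_from_interval[OF _ interval_n[OF _ assms(2)]] unfolding tt_def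
    by simp
qed

lemma bound_star: "\<bar>tt astar j\<bar> \<le> 14 * (1/3)^j"
proof (cases "j = 0")
  case True
  then show ?thesis using astar_ge1 astar_le2 by (simp add: tt_def)
next
  case False
  then show ?thesis using bounds_from_interval[OF _ interval_star] unfolding tt_def
    by simp
qed

lemma PR_mid:
  assumes "1 \<le> j" "2 * j \<le> n"
  shows "\<bar>P (aa n) j - 1\<bar> \<le> 4 * (1/3)^j \<and> \<bar>R (aa n) j - 1\<bar> \<le> 6 * (1/3)^j"
  using bounds_from_interval[OF assms(1) interval_n[OF assms]] by simp

lemma dom_conv:
  fixes D :: "nat \<Rightarrow> nat \<Rightarrow> real" and M :: "nat \<Rightarrow> real" and K :: "nat \<Rightarrow> nat"
  assumes lim: "\<And>j. (\<lambda>n. D n j) \<longlonglongrightarrow> 0" and bnd: "\<And>n j. \<bar>D n j\<bar> \<le> M j"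
    and sm: "summable M"
  shows "(\<lambda>n. \<Sum>j<K n. D n j) \<longlonglongrightarrow> 0"
proof (rule LIMSEQ_I)
  fix r :: real assume r: "0 < r"
  have M0: "0 \<le> M j" for j using bnd[of 0 j] by linarith
  obtain J where J: "\<forall>n\<ge>J. norm (\<Sum>i. M (i + n)) < r/2"
    using suminf_exist_split[of "r/2" M] r sm by auto
  have tail: "(\<Sum>i. M (i + J)) < r/2" using J by auto
  have fin: "(\<lambda>n. \<Sum>j<J. \<bar>D n j\<bar>) \<longlonglongrightarrow> 0"
    by (intro tendsto_null_sum tendsto_rabs_zero lim)
  obtain N where N: "\<forall>n\<ge>N. norm ((\<Sum>j<J. \<bar>D n j\<bar>) - 0) < r/2"
    using LIMSEQ_D[OF fin, of "r/2"] r by auto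
  show "\<exists>no. \<forall>n\<ge>no. norm ((\<Sum>j<K n. D n j) - 0) < r"
  proof (intro exI allI impI)
    fix n assume n: "n \<ge> N"
    define L where "L = max (K n) J"
    have a: "\<bar>\<Sum>j<K n. D n j\<bar> \<le> (\<Sum>j<K n. \<bar>D n j\<bar>)" by (rule sum_abs)
    have b: "(\<Sum>j<K n. \<bar>D n j\<bar>) \<le> (\<Sum>j<L. \<bar>D n j\<bar>)"
      by (rule sum_mono2) (auto simp: L_def)
    have c: "(\<Sum>j<L. \<bar>D n j\<bar>) = (\<Sum>j<J. \<bar>D n j\<bar>) + (\<Sum>j=J..<L. \<bar>D n j\<bar>)"
      using sum.atLeastLessThan_concat[of 0 J L "\<lambda>j. \<bar>D n j\<bar>"] by (simp add: L_def atLeast0LessThan)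
    have d: "(\<Sum>j=J..<L. \<bar>D n j\<bar>) \<le> (\<Sum>j=J..<L. M j)" by (rule sum_mono) (rule bnd)
    have e: "(\<Sum>j=J..<L. M j) = (\<Sum>i<L - J. M (i + J))"
      using sum.shift_bounds_nat_ivl[of M 0 J "L - J"] by (simp add: L_def atLeast0LessThan)
    have f: "(\<Sum>i<L - J. M (i + J)) \<le> (\<Sum>i. M (i + J))"
      by (rule sum_le_suminf) (auto simp: summable_ignore_initial_segment sm M0)
    have g: "(\<Sum>j<J. \<bar>D n j\<bar>) < r/2" using N n by auto
    have "\<bar>\<Sum>j<K n. D n j\<bar> < r" using a b c d e f g tail by linarith
    then show "norm ((\<Sum>j<K n. D n j) - 0) < r" by simp
  qed
qed

lemma sum_tt_star: "summable (tt astar)"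
proof (rule summable_comparison_test)
  show "\<exists>N. \<forall>n\<ge>N. norm (tt astar n) \<le> 14 * (1/3)^n" using bound_star by auto
  show "summable (\<lambda>n. 14 * (1/3::real)^n)" by (intro summable_mult summable_geometric) simp
qed

lemma T_conv:
  assumes c: "filterlim c at_top sequentially"
    and cj: "\<And>n j. 1 \<le> n \<Longrightarrow> j < c n \<Longrightarrow> 2 * j \<le> n"
  shows "(\<lambda>n. \<Sum>j<c n. tt (aa n) j) \<longlonglongrightarrow> suminf (tt astar)"
proof -
  define D where "D n j = (if 1 \<le> n \<and> j < c n then tt (aa n) j - tt astar j else 0)" for n j
  have Dlim: "(\<lambda>n. D n j) \<longlonglongrightarrow> 0" for j
  proof -
    have "(\<lambda>n. tt (aa n) j) \<longlonglongrightarrow> tt astar j"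
      unfolding tt_def using conv_PR[of j] by (intro tendsto_intros) auto
    then have l: "(\<lambda>n. tt (aa n) j - tt astar j) \<longlonglongrightarrow> 0"
      using tendsto_diff[OF _ tendsto_const, of _ "tt astar j" sequentially "tt astar j"] by simp
    have ev1: "eventually (\<lambda>n. Suc j \<le> c n) sequentially" using c by (simp add: filterlim_at_top)
    have ev2: "eventually (\<lambda>n. 1 \<le> n) sequentially" by (rule eventually_ge_at_top)
    have "eventually (\<lambda>n. tt (aa n) j - tt astar j = D n j) sequentially"
      using ev1 ev2 by eventually_elim (auto simp: D_def)
    then show ?thesis by (rule Lim_transform_eventually[OF l])
  qed
  have Dbnd: "\<bar>D n j\<bar> \<le> 28 * (1/3)^j" for n j
  proof (cases "1 \<le> n \<and> j < c n")
    case True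
    then have "\<bar>tt (aa n) j\<bar> \<le> 14 * (1/3)^j" using bound_n cj by blast
    moreover have "\<bar>tt astar j\<bar> \<le> 14 * (1/3)^j" by (rule bound_star)
    ultimately show ?thesis using True unfolding D_def by simp
  next
    case False then have "D n j = 0" unfolding D_def by auto
    then show ?thesis by simp
  qed
  have sm28: "summable (\<lambda>j. 28 * (1/3::real)^j)" by (intro summable_mult summable_geometric) simp
  have l1: "(\<lambda>n. \<Sum>j<c n. D n j) \<longlonglongrightarrow> 0" using dom_conv[OF Dlim Dbnd sm28] .
  have l2: "(\<lambda>n. \<Sum>j<c n. tt astar j) \<longlonglongrightarrow> suminf (tt astar)"
    using filterlim_compose[OF summable_LIMSEQ[OF sum_tt_star] c] .
  have l3: "(\<lambda>n. (\<Sum>j<c n. D n j) + (\<Sum>j<c n. tt astar j)) \<longlonglongrightarrow> 0 + suminf (tt astar)"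
    by (rule tendsto_add[OF l1 l2])
  have "eventually (\<lambda>n. (\<Sum>j<c n. D n j) + (\<Sum>j<c n. tt astar j) = (\<Sum>j<c n. tt (aa n) j)) sequentially"
    using eventually_ge_at_top[of 1]
  proof eventually_elim
    case (elim n)
    have "(\<Sum>j<c n. D n j) = (\<Sum>j<c n. tt (aa n) j - tt astar j)"
      using elim by (intro sum.cong) (auto simp: D_def)
    then show ?case by (simp add: sum_subtractf)
  qed
  then show ?thesis using Lim_transform_eventually[OF l3] by simp
qed

lemma second_half_identity:
  "(\<Sum>k=1..K. 3 - 2 / P a (k-1) - R a k) = (\<Sum>j<Suc K. tt a j) - 3 + 2 * P a K + 2 * R a K"
proof (induction K)
  case 0 then show ?case by (simp add: tt_def)
next
  case (Suc K)
  have "(\<Sum>k=1..Suc K. 3 - 2 / P a (k-1) - R a k) = (\<Sum>k=1..K. 3 - 2 / P a (k-1) - R a k) + (3 - 2 / P a K - R a (Suc K))"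
    by simp
  also have "\<dots> = (\<Sum>j<Suc (Suc K). tt a j) - 3 + 2 * P a (Suc K) + 2 * R a (Suc K)"
    unfolding Suc.IH by (simp add: tt_def R_Suc[of a K] algebra_simps)
  finally show ?case .
qed

lemma sym_term:
  assumes "1 \<le> k" "k < n"
  shows "tt (aa n) (n - k) = 3 - 2 / P (aa n) (k-1) - R (aa n) k"
proof -
  let ?p = "P (aa n)"
  have s1: "?p (k-1) * ?p (n - k) = 1" using sym_aa[of "k-1" n] assms by (simp add: Suc_diff_Suc)
  have s2: "?p k * ?p (n - k - 1) = 1" using sym_aa[of k n] assms by simp
  have pos: "?p k > 0" "?p (k-1) > 0" "?p (n-k-1) > 0" "?p (n-k) > 0" using aa_pos assms by auto
  have Rk: "R (aa n) k = ?p k / ?p (k-1)" using R_eq[of "aa n" "k-1"] pos assms by simp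
  have Rj: "R (aa n) (n-k) = ?p (n-k) / ?p (n-k-1)"
    using R_eq[of "aa n" "n-k-1"] pos assms by (simp add: Suc_diff_Suc)
  have e1: "?p (n-k) = 1 / ?p (k-1)" "?p (n-k-1) = 1 / ?p k" using s1 s2 pos
    by (simp_all add: field_simps)
  have "R (aa n) (n-k) = (1 / ?p (k-1)) / (1 / ?p k)" using Rj e1 by simp
  also have "\<dots> = R (aa n) k" using pos Rk by (simp add: field_simps)
  finally show ?thesis unfolding tt_def using e1 by simp
qed

lemma C_decomp:
  assumes n: "1 \<le> n"
  shows "C_val n = (\<Sum>j<n - n div 2. tt (aa n) j) +
           ((\<Sum>j<Suc (n div 2). tt (aa n) j) - 3 + 2 * P (aa n) (n div 2) + 2 * R (aa n) (n div 2))"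
proof -
  define K where "K = n div 2"
  define m where "m = n - K"
  have Kn: "K < n" "m \<le> n" using n unfolding K_def m_def by auto
  have "C_val n = (\<Sum>j<n. tt (aa n) j)" using C_val_eq[OF n] by (simp add: tt_def)
  also have "\<dots> = (\<Sum>j<m. tt (aa n) j) + (\<Sum>j=m..<n. tt (aa n) j)"
    using sum.atLeastLessThan_concat[of 0 m n "tt (aa n)"] Kn by (simp add: atLeast0LessThan)
  also have "(\<Sum>j=m..<n. tt (aa n) j) = (\<Sum>k=1..K. tt (aa n) (n - k))"
    by (rule sum.reindex_bij_witness[where i="\<lambda>b. n - b" and j="\<lambda>a. n - a"])
       (use Kn in \<open>auto simp: m_def\<close>)
  also have "\<dots> = (\<Sum>k=1..K. 3 - 2 / P (aa n) (k-1) - R (aa n) k)"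
    by (intro sum.cong refl sym_term) (use Kn in auto)
  also have "\<dots> = (\<Sum>j<Suc K. tt (aa n) j) - 3 + 2 * P (aa n) K + 2 * R (aa n) K"
    by (rule second_half_identity)
  finally show ?thesis unfolding K_def m_def .
qed

lemma div2_at_top: "filterlim (\<lambda>n::nat. n div 2) at_top sequentially"
  unfolding filterlim_at_top eventually_sequentially
proof (intro allI)
  fix Z :: nat show "\<exists>N. \<forall>n\<ge>N. Z \<le> n div 2" by (rule exI[of _ "2 * Z"]) auto
qed

lemma mid_conv:
  "(\<lambda>n. P (aa n) (n div 2)) \<longlonglongrightarrow> 1 \<and> (\<lambda>n. R (aa n) (n div 2)) \<longlonglongrightarrow> 1"
proof -
  have g0: "(\<lambda>n. (1/3::real) ^ (n div 2)) \<longlonglongrightarrow> 0"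
    using filterlim_compose[OF LIMSEQ_power_zero[of "1/3::real"] div2_at_top] by simp
  have g: "(\<lambda>n. 6 * (1/3::real) ^ (n div 2)) \<longlonglongrightarrow> 0"
    using tendsto_mult[OF tendsto_const[of 6] g0] by simp
  have lo: "(\<lambda>n. 1 - 6 * (1/3::real) ^ (n div 2)) \<longlonglongrightarrow> 1"
    using tendsto_diff[OF tendsto_const[of 1] g] by simp
  have hi: "(\<lambda>n. 1 + 6 * (1/3::real) ^ (n div 2)) \<longlonglongrightarrow> 1"
    using tendsto_add[OF tendsto_const[of 1] g] by simp
  have ev: "eventually (\<lambda>n. \<bar>P (aa n) (n div 2) - 1\<bar> \<le> 6 * (1/3) ^ (n div 2) \<and>
                           \<bar>R (aa n) (n div 2) - 1\<bar> \<le> 6 * (1/3) ^ (n div 2)) sequentially"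
    using eventually_ge_at_top[of 2]
  proof eventually_elim
    case (elim n)
    then have "1 \<le> n div 2" "2 * (n div 2) \<le> n" by auto
    then have "\<bar>P (aa n) (n div 2) - 1\<bar> \<le> 4 * (1/3) ^ (n div 2)"
        "\<bar>R (aa n) (n div 2) - 1\<bar> \<le> 6 * (1/3) ^ (n div 2)" using PR_mid[of "n div 2" n] by auto
    moreover have "(0::real) \<le> (1/3) ^ (n div 2)" by simp
    ultimately show ?case by linarith
  qed
  have "(\<lambda>n. P (aa n) (n div 2)) \<longlonglongrightarrow> 1"
    by (rule tendsto_sandwich[OF _ _ lo hi]) (use ev in \<open>eventually_elim, auto\<close>)+
  moreover have "(\<lambda>n. R (aa n) (n div 2)) \<longlonglongrightarrow> 1"
    by (rule tendsto_sandwich[OF _ _ lo hi]) (use ev in \<open>eventually_elim, auto\<close>)+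
  ultimately show ?thesis by simp
qed

lemma C_conv: "C_val \<longlonglongrightarrow> 2 * suminf (tt astar) + 1"
proof -
  let ?S = "suminf (tt astar)"
  have c1: "filterlim (\<lambda>n::nat. n - n div 2) at_top sequentially"
    unfolding filterlim_at_top eventually_sequentially
  proof (intro allI)
    fix Z :: nat show "\<exists>N. \<forall>n\<ge>N. Z \<le> n - n div 2" by (rule exI[of _ "2 * Z"]) auto
  qed
  have c2: "filterlim (\<lambda>n::nat. Suc (n div 2)) at_top sequentially"
    unfolding filterlim_at_top eventually_sequentially
  proof (intro allI)
    fix Z :: nat show "\<exists>N. \<forall>n\<ge>N. Z \<le> Suc (n div 2)" by (rule exI[of _ "2 * Z"]) auto
  qed
  have t1: "(\<lambda>n. \<Sum>j<n - n div 2. tt (aa n) j) \<longlonglongrightarrow> ?S"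
    by (rule T_conv[OF c1]) auto
  have t2: "(\<lambda>n. \<Sum>j<Suc (n div 2). tt (aa n) j) \<longlonglongrightarrow> ?S"
    by (rule T_conv[OF c2]) auto
  have l: "(\<lambda>n. (\<Sum>j<n - n div 2. tt (aa n) j) +
           ((\<Sum>j<Suc (n div 2). tt (aa n) j) - 3 + 2 * P (aa n) (n div 2) + 2 * R (aa n) (n div 2)))
        \<longlonglongrightarrow> ?S + (?S - 3 + 2 * 1 + 2 * 1)"
    using mid_conv by (intro tendsto_intros t1 t2) auto
  have "eventually (\<lambda>n. (\<Sum>j<n - n div 2. tt (aa n) j) +
           ((\<Sum>j<Suc (n div 2). tt (aa n) j) - 3 + 2 * P (aa n) (n div 2) + 2 * R (aa n) (n div 2))
           = C_val n) sequentially"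
    using eventually_ge_at_top[of 1] by eventually_elim (simp add: C_decomp)
  from Lim_transform_eventually[OF l this] show ?thesis by simp
qed

theorem theorem1:
  shows "\<exists>pstar :: nat \<Rightarrow> real.
           (\<forall>j. (\<lambda>n. p_traj j n) \<longlonglongrightarrow> pstar j) \<and>
           (let ustar = (\<lambda>j. if j = 0 then 0 else 1 / pstar (j - 1));
                S_N = (\<lambda>N. \<Sum>j=0..N. 3 - 2 * pstar j - pstar j * ustar j)
            in \<exists>S C. S_N \<longlonglongrightarrow> S \<and> C_val \<longlonglongrightarrow> C \<and> C = 2 * S + 1)"
proof -
  define ps where "ps j = P astar j" for j
  have conv: "\<forall>j. (\<lambda>n. p_traj j n) \<longlonglongrightarrow> ps j"
  proof
    fix j
    have "eventually (\<lambda>n. P (aa n) j = p_traj j n) sequentially"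
      using eventually_ge_at_top[of "Suc j"] by eventually_elim (simp add: p_traj_eq)
    moreover have "(\<lambda>n. P (aa n) j) \<longlonglongrightarrow> ps j" unfolding ps_def using conv_PR by blast
    ultimately show "(\<lambda>n. p_traj j n) \<longlonglongrightarrow> ps j" using Lim_transform_eventually by blast
  qed
  have term_eq: "3 - 2 * ps j - ps j * (if j = 0 then 0 else 1 / ps (j - 1)) = tt astar j" for j
  proof (cases j)
    case 0 then show ?thesis by (simp add: tt_def ps_def)
  next
    case (Suc i)
    have "P astar i > 0" by (rule Pstar_pos)
    then have "R astar j = ps j * (1 / ps (j - 1))" using R_eq[of astar i] Suc by (simp add: ps_def)
    then show ?thesis using Suc by (simp add: tt_def ps_def)
  qed
  have eq: "(\<Sum>j=0..N. 3 - 2 * ps j - ps j * (if j = 0 then 0 else 1 / ps (j - 1))) = (\<Sum>j<Suc N. tt astar j)" for N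
    by (simp only: term_eq atLeast0AtMost lessThan_Suc_atMost)
  have SN: "(\<lambda>N. \<Sum>j=0..N. 3 - 2 * ps j - ps j * (if j = 0 then 0 else 1 / ps (j - 1))) \<longlonglongrightarrow> suminf (tt astar)"
    unfolding eq using LIMSEQ_Suc[OF summable_LIMSEQ[OF sum_tt_star]] .
  show ?thesis
    unfolding Let_def
    by (intro exI[of _ ps] conjI conv exI[of _ "suminf (tt astar)"] exI[of _ "2 * suminf (tt astar) + 1"] SN C_conv refl)
qed

end
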